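(* Assume the abstract framework described in the context. For $f\in\mathcal{D}_2$ and $F\in\mathcal{H}_2$ with $\operatorname{Tr}_2F=f$, set $\operatorname{Tr}_2^\Omega\mathbf{D}^B_\Omega f=-\operatorname{Tr}_2F+\operatorname{Tr}_2\Pi^L(L(\mathbf{1}_\Omega F))$ and $\operatorname{Tr}_2^{\mathcal{C}}\mathbf{D}^B_{\mathcal{C}}f=-\operatorname{Tr}_2F+\operatorname{Tr}_2\Pi^L(L(\mathbf{1}_{\mathcal{C}}F))$. Then for all $f\in\mathcal{D}_2$ and $g\in\mathcal{N}_2$, $$\operatorname{Tr}_2^\Omega\mathbf{D}^B_\Omega f+\operatorname{Tr}_2^{\mathcal{C}}\mathbf{D}^B_{\mathcal{C}}f=-f,\qquad \mathbf{M}^\Omega_B\big((\mathbf{S}^L_\Omega g)|_\Omega\big)+\mathbf{M}^{\mathcal{C}}_B\big((\mathbf{S}^L_\Omega g)|_{\mathcal{C}}\big)=g,\qquad \mathbf{M}^\Omega_B(\mathbf{D}^B_\Omega f)-\mathbf{M}^{\mathcal{C}}_B(\mathbf{D}^B_{\mathcal{C}}f)=0.$$ If moreover there are bounded operators $\operatorname{Tr}_2^\Omega:\mathcal{H}_2^\Omega\to\mathcal{D}_2$ and $\operatorname{Tr}_2^{\mathcal{C}}:\mathcal{H}_2^{\mathcal{C}}\to\mathcal{D}_2$ such that $\operatorname{Tr}_2F=\operatorname{Tr}_2^\Omega(F|_\Omega)=\operatorname{Tr}_2^{\mathcal{C}}(F|_{\mathcal{C}})$ for all $F\in\mathcal{H}_2$,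 then in addition $\operatorname{Tr}_2^\Omega\big((\mathbf{S}^L_\Omega g)|_\Omega\big)-\operatorname{Tr}_2^{\mathcal{C}}\big((\mathbf{S}^L_\Omega g)|_{\mathcal{C}}\big)=0$ for all $g\in\mathcal{N}_2$.
   Context: Abstract framework. Let $\mathcal{H}_1,\mathcal{H}_2$ be complex Hilbert spaces, and for $j=1,2$ let $\widehat{\mathcal{H}}_j^\Omega$, $\widehat{\mathcal{H}}_j^{\mathcal{C}}$, $\widehat{\mathcal{D}}_j$ be normed (or seminormed) vector spaces, with bounded linear operators $\operatorname{Tr}_j:\mathcal{H}_j\to\widehat{\mathcal{D}}_j$ and bounded linear "restriction" operators $F\mapsto F|_\Omega\in\widehat{\mathcal{H}}_j^\Omega$, $F\mapsto F|_{\mathcal{C}}\in\widehat{\mathcal{H}}_j^{\mathcal{C}}$ on $\mathcal{H}_j$. Define $\mathcal{H}_j^\Omega=\{F|_\Omega:F\in\mathcal{H}_j\}$, $\mathcal{H}_j^{\mathcal{C}}$ and $\mathcal{D}_j=\{\operatorname{Tr}_jF:F\in\mathcal{H}_j\}$ with the quotient norms $\inf\|F\|_{\mathcal{H}_j}$ over preimages (modulo elements of norm zero). Let $\mathcal{N}_2=\mathcal{D}_1^*$, $\mathcal{N}_1=\mathcal{D}_2^*$ with duality pairings $\langle\cdot,\cdot\rangle$. Given are bounded bilinear forms $B:\mathcal{H}_1\times\mathcal{H}_2\to\mathbb{C}$, $B^\Omega:\mathcal{H}_1^\Omega\times\mathcal{H}_2^\Omega\to\mathbb{C}$, $B^{\mathcal{C}}:\mathcal{H}_1^{\mathcal{C}}\times\mathcal{H}_2^{\mathcal{C}}\to\mathbb{C}$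 and $\lambda>0$ such that for all $u\in\mathcal{H}_1$, $v\in\mathcal{H}_2$, $\varphi,\psi\in\mathcal{H}_j$: (i) $\sup_{w\ne0}|B(w,v)|/\|w\|_{\mathcal{H}_1}\ge\lambda\|v\|_{\mathcal{H}_2}$ and $\sup_{w\ne0}|B(u,w)|/\|w\|_{\mathcal{H}_2}\ge\lambda\|u\|_{\mathcal{H}_1}$; (ii) $B(u,v)=B^\Omega(u|_\Omega,v|_\Omega)+B^{\mathcal{C}}(u|_{\mathcal{C}},v|_{\mathcal{C}})$; (iii) if $\operatorname{Tr}_j\varphi=\operatorname{Tr}_j\psi$ there is $w\in\mathcal{H}_j$ with $w|_\Omega=\varphi|_\Omega$, $w|_{\mathcal{C}}=\psi|_{\mathcal{C}}$, $\operatorname{Tr}_jw=\operatorname{Tr}_j\varphi$. Definitions (for $\mathcal{O}\in\{\Omega,\mathcal{C}\}$): for $u\in\mathcal{H}_2^{\mathcal{O}}$, $(Lu)|_{\mathcal{O}}=0$ means $B^{\mathcal{O}}(\varphi|_{\mathcal{O}},u)=0$ whenever $\varphi\in\mathcal{H}_1$, $\operatorname{Tr}_1\varphi=0$; for such $u$, $\mathbf{M}^{\mathcal{O}}_Bu\in\mathcal{N}_2$ is defined by $\langle\operatorname{Tr}_1\varphi,\mathbf{M}^{\mathcal{O}}_Bu\rangle=B^{\mathcal{O}}(\varphi|_{\mathcal{O}},u)$ for all $\varphi\in\mathcal{H}_1$. For $u\in\mathcal{H}_2^{\mathcal{O}}$, $L(u\mathbf{1}_{\mathcal{O}})\in\mathcal{H}_1^*$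 is $\langle\varphi,L(u\mathbf{1}_{\mathcal{O}})\rangle=B^{\mathcal{O}}(\varphi|_{\mathcal{O}},u)$; $L(\mathbf{1}_{\mathcal{O}}F)=L(F|_{\mathcal O}\mathbf 1_{\mathcal O})$ for $F\in\mathcal{H}_2$. Newton potential: $\Pi^LH\in\mathcal{H}_2$ ($H\in\mathcal{H}_1^*$) is the unique element with $B(\varphi,\Pi^LH)=\langle\varphi,H\rangle$ for all $\varphi\in\mathcal{H}_1$. Single layer: for $g\in\mathcal{N}_2$, $\mathbf{S}^L_\Omega g\in\mathcal{H}_2$ is unique with $B(\varphi,\mathbf{S}^L_\Omega g)=\langle\operatorname{Tr}_1\varphi,g\rangle$ for all $\varphi\in\mathcal{H}_1$. Double layer: $\mathbf{D}^B_{\mathcal{O}}f=-F|_{\mathcal{O}}+(\Pi^L(L(\mathbf{1}_{\mathcal{O}}F)))|_{\mathcal{O}}\in\mathcal H_2^{\mathcal O}$ for any $F\in\mathcal H_2$ with $\operatorname{Tr}_2F=f\in\mathcal{D}_2$ (independent of the choice of $F$). The restrictions $(\mathbf S^L_\Omega g)|_{\mathcal O}$ and $\mathbf D^B_{\mathcal O}f$ satisfy $(Lu)|_{\mathcal O}=0$, so their Neumann boundary values are defined. *)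

theory Defs
  imports Complex_Main "HOL-Library.Extended_Real"
begin

text \<open>Complex vector spaces are modelled as types of class ab_group_add together with
  an explicit complex scalar multiplication (predicate Vector_Spaces.vector_space).\<close>

definition hnorm :: "('h \<Rightarrow> 'h \<Rightarrow> complex) \<Rightarrow> 'h \<Rightarrow> real" where
  "hnorm ip x = sqrt (Re (ip x x))"

definition complex_hilbert :: "(complex \<Rightarrow> 'h::ab_group_add \<Rightarrow> 'h) \<Rightarrow> ('h \<Rightarrow> 'h \<Rightarrow> complex) \<Rightarrow> bool" where
  "complex_hilbert s ip \<longleftrightarrow>
     Vector_Spaces.vector_space s
   \<and> (\<forall>x y z. ip (x + y) z = ip x z + ip y z)
   \<and> (\<forall>c x y. ip (s c x) y = c * ip x y)
   \<and> (\<forall>x y. ip y x = cnj (ip x y))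
   \<and> (\<forall>x. 0 \<le> Re (ip x x))
   \<and> (\<forall>x. ip x x = 0 \<longrightarrow> x = 0)
   \<and> (\<forall>X :: nat \<Rightarrow> 'h. (\<forall>e>0. \<exists>N. \<forall>m\<ge>N. \<forall>n\<ge>N. hnorm ip (X m - X n) < e)
          \<longrightarrow> (\<exists>l. (\<lambda>n. hnorm ip (X n - l)) \<longlonglongrightarrow> 0))"

definition seminormed :: "(complex \<Rightarrow> 'v::ab_group_add \<Rightarrow> 'v) \<Rightarrow> ('v \<Rightarrow> real) \<Rightarrow> bool" where
  "seminormed s n \<longleftrightarrow> Vector_Spaces.vector_space s
   \<and> (\<forall>x. 0 \<le> n x) \<and> (\<forall>x y. n (x + y) \<le> n x + n y) \<and> (\<forall>c x. n (s c x) = cmod c * n x)"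

definition bounded_op :: "(complex \<Rightarrow> 'a::ab_group_add \<Rightarrow> 'a) \<Rightarrow> ('a \<Rightarrow> real)
    \<Rightarrow> (complex \<Rightarrow> 'b::ab_group_add \<Rightarrow> 'b) \<Rightarrow> ('b \<Rightarrow> real) \<Rightarrow> ('a \<Rightarrow> 'b) \<Rightarrow> bool" where
  "bounded_op s1 n1 s2 n2 T \<longleftrightarrow> Vector_Spaces.linear s1 s2 T \<and> (\<exists>C. \<forall>x. n2 (T x) \<le> C * n1 x)"

definition bounded_bilinear_form :: "(complex \<Rightarrow> 'a::ab_group_add \<Rightarrow> 'a) \<Rightarrow> ('a \<Rightarrow> real)
    \<Rightarrow> (complex \<Rightarrow> 'b::ab_group_add \<Rightarrow> 'b) \<Rightarrow> ('b \<Rightarrow> real) \<Rightarrow> ('a \<Rightarrow> 'b \<Rightarrow> complex) \<Rightarrow> bool" where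
  "bounded_bilinear_form s1 n1 s2 n2 B \<longleftrightarrow>
     (\<forall>u. Vector_Spaces.linear s2 (*) (B u)) \<and> (\<forall>v. Vector_Spaces.linear s1 (*) (\<lambda>u. B u v))
   \<and> (\<exists>C. \<forall>u v. cmod (B u v) \<le> C * n1 u * n2 v)"

definition qnorm :: "('h \<Rightarrow> 'v) \<Rightarrow> ('h \<Rightarrow> real) \<Rightarrow> 'v \<Rightarrow> real" where
  "qnorm r n a = (INF F\<in>{F. r F = a}. n F)"

text \<open>Membership in N_2 = D_1^*: a functional on D_1 = range Tr1 (values off D_1 are irrelevant),
  linear and bounded w.r.t. the quotient norm of D_1.\<close>
definition in_N2 :: "(complex \<Rightarrow> 'h1::ab_group_add \<Rightarrow> 'h1) \<Rightarrow> ('h1 \<Rightarrow> 'h1 \<Rightarrow> complex)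
    \<Rightarrow> ('h1 \<Rightarrow> 'd1) \<Rightarrow> ('d1 \<Rightarrow> complex) \<Rightarrow> bool" where
  "in_N2 s1 ip1 Tr1 g \<longleftrightarrow>
     (\<forall>\<phi> \<psi> c. g (Tr1 (\<phi> + s1 c \<psi>)) = g (Tr1 \<phi>) + c * g (Tr1 \<psi>))
   \<and> (\<exists>C. \<forall>\<phi>. cmod (g (Tr1 \<phi>)) \<le> C * qnorm Tr1 (hnorm ip1) (Tr1 \<phi>))"

definition newton_pot :: "('h1 \<Rightarrow> 'h2 \<Rightarrow> complex) \<Rightarrow> ('h1 \<Rightarrow> complex) \<Rightarrow> 'h2" where
  "newton_pot B H = (THE u. \<forall>\<phi>. B \<phi> u = H \<phi>)"

text \<open>L(u 1_O) as an element of H_1^*: phi maps to B^O(phi|_O, u).\<close>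
definition L_ind :: "('o1 \<Rightarrow> 'o2 \<Rightarrow> complex) \<Rightarrow> ('h1 \<Rightarrow> 'o1) \<Rightarrow> 'o2 \<Rightarrow> ('h1 \<Rightarrow> complex)" where
  "L_ind BO rO1 u = (\<lambda>\<phi>. BO (rO1 \<phi>) u)"

definition single_layer :: "('h1 \<Rightarrow> 'h2 \<Rightarrow> complex) \<Rightarrow> ('h1 \<Rightarrow> 'd1) \<Rightarrow> ('d1 \<Rightarrow> complex) \<Rightarrow> 'h2" where
  "single_layer B Tr1 g = (THE u. \<forall>\<phi>. B \<phi> u = g (Tr1 \<phi>))"

definition conormal :: "('o1 \<Rightarrow> 'o2 \<Rightarrow> complex) \<Rightarrow> ('h1 \<Rightarrow> 'o1) \<Rightarrow> ('h1 \<Rightarrow> 'd1) \<Rightarrow> 'o2 \<Rightarrow> ('d1 \<Rightarrow> complex)" where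
  "conormal BO rO1 Tr1 u =
     (THE g. (\<forall>\<phi>. g (Tr1 \<phi>) = BO (rO1 \<phi>) u) \<and> (\<forall>x. x \<notin> range Tr1 \<longrightarrow> g x = 0))"

definition double_layer :: "('h1 \<Rightarrow> 'h2 \<Rightarrow> complex) \<Rightarrow> ('o1 \<Rightarrow> 'o2::ab_group_add \<Rightarrow> complex)
    \<Rightarrow> ('h1 \<Rightarrow> 'o1) \<Rightarrow> ('h2 \<Rightarrow> 'o2) \<Rightarrow> ('h2 \<Rightarrow> 'd2) \<Rightarrow> 'd2 \<Rightarrow> 'o2" where
  "double_layer B BO rO1 rO2 Tr2 f =
     (let F = (SOME F. Tr2 F = f) in - rO2 F + rO2 (newton_pot B (L_ind BO rO1 (rO2 F))))"

definition trace_double_layer :: "('h1 \<Rightarrow> 'h2 \<Rightarrow> complex) \<Rightarrow> ('o1 \<Rightarrow> 'o2 \<Rightarrow> complex)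
    \<Rightarrow> ('h1 \<Rightarrow> 'o1) \<Rightarrow> ('h2 \<Rightarrow> 'o2) \<Rightarrow> ('h2 \<Rightarrow> 'd2::ab_group_add) \<Rightarrow> 'd2 \<Rightarrow> 'd2" where
  "trace_double_layer B BO rO1 rO2 Tr2 f =
     (let F = (SOME F. Tr2 F = f) in - Tr2 F + Tr2 (newton_pot B (L_ind BO rO1 (rO2 F))))"

definition partial_trace :: "(complex \<Rightarrow> 'h2::ab_group_add \<Rightarrow> 'h2) \<Rightarrow> ('h2 \<Rightarrow> 'h2 \<Rightarrow> complex)
    \<Rightarrow> ('h2 \<Rightarrow> 'o2) \<Rightarrow> (complex \<Rightarrow> 'd2::ab_group_add \<Rightarrow> 'd2) \<Rightarrow> ('h2 \<Rightarrow> 'd2) \<Rightarrow> ('o2 \<Rightarrow> 'd2) \<Rightarrow> bool" where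
  "partial_trace s2 ip2 rO2 sD2 Tr2 TrO \<longleftrightarrow>
     (\<forall>F. TrO (rO2 F) \<in> range Tr2)
   \<and> (\<forall>F G c. TrO (rO2 (F + s2 c G)) = TrO (rO2 F) + sD2 c (TrO (rO2 G)))
   \<and> (\<exists>C. \<forall>F. qnorm Tr2 (hnorm ip2) (TrO (rO2 F)) \<le> C * qnorm rO2 (hnorm ip2) (rO2 F))
   \<and> (\<forall>F. Tr2 F = TrO (rO2 F))"

end

theory Submission imports Defs begin

lemma lin_add: "Vector_Spaces.linear s1 s2 f \<Longrightarrow> f (x + y) = f x + f y"
  by (simp add: Vector_Spaces.linear_iff)
lemma lin_scale: "Vector_Spaces.linear s1 s2 f \<Longrightarrow> f (s1 c x) = s2 c (f x)"
  by (simp add: Vector_Spaces.linear_iff)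
lemma add_hom_zero: "(\<And>x y. (f::'a::ab_group_add \<Rightarrow> 'b::ab_group_add) (x + y) = f x + f y) \<Longrightarrow> f 0 = 0"
proof -
  assume h: "\<And>x y. f (x + y) = f x + (f y::'b::ab_group_add)"
  have "f (0 + 0) = f 0 + f 0" by (rule h)
  thus ?thesis by (metis add.right_neutral add_left_cancel)
qed
lemma add_hom_diff: "(\<And>x y. (f::'a::ab_group_add \<Rightarrow> 'b::ab_group_add) (x + y) = f x + f y) \<Longrightarrow> f (x - y) = f x - f y"
proof -
  assume h: "\<And>x y. f (x + y) = f x + (f y::'b::ab_group_add)"
  have "f (x - y + y) = f (x - y) + f y" by (rule h)
  thus ?thesis by (simp add: eq_diff_eq del: diff_add_cancel)
qed
lemma add_hom_minus: "(\<And>x y. (f::'a::ab_group_add \<Rightarrow> 'b::ab_group_add) (x + y) = f x + f y) \<Longrightarrow> f (- x) = - f x"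
proof -
  assume h: "\<And>x y. f (x + y) = f x + (f y::'b::ab_group_add)"
  have "f (0 - x) = f 0 - f x" by (rule add_hom_diff, rule h)
  thus ?thesis using add_hom_zero[of f] h by simp
qed
lemma lin_diff: "Vector_Spaces.linear s1 s2 f \<Longrightarrow> f (x - y) = f x - f y"
  by (rule add_hom_diff) (simp add: Vector_Spaces.linear_iff)
lemma lin_zero: "Vector_Spaces.linear s1 s2 f \<Longrightarrow> f 0 = 0"
  by (rule add_hom_zero) (simp add: Vector_Spaces.linear_iff)
lemma lin_minus: "Vector_Spaces.linear s1 s2 f \<Longrightarrow> f (- x) = - f x"
  by (rule add_hom_minus) (simp add: Vector_Spaces.linear_iff)

locale chs =
  fixes s :: "complex \<Rightarrow> 'h::ab_group_add \<Rightarrow> 'h" and ip :: "'h \<Rightarrow> 'h \<Rightarrow> complex"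
  assumes hil: "complex_hilbert s ip"
begin

lemma vs: "vector_space s" using hil unfolding complex_hilbert_def by blast
sublocale V: vector_space s by (rule vs)

lemma ip_add1: "ip (x + y) z = ip x z + ip y z" using hil unfolding complex_hilbert_def by blast
lemma ip_scale1: "ip (s c x) y = c * ip x y" using hil unfolding complex_hilbert_def by blast
lemma ip_cnj: "ip y x = cnj (ip x y)" using hil unfolding complex_hilbert_def by blast
lemma ip_pos: "0 \<le> Re (ip x x)" using hil unfolding complex_hilbert_def by blast
lemma ip_def0: "ip x x = 0 \<Longrightarrow> x = 0" using hil unfolding complex_hilbert_def by blast
lemma complete: "(\<forall>e>0. \<exists>N. \<forall>m\<ge>N. \<forall>n\<ge>N. hnorm ip (X m - X n) < e)
          \<Longrightarrow> (\<exists>l. (\<lambda>n. hnorm ip (X n - l)) \<longlonglongrightarrow> 0)" using hil unfolding complex_hilbert_def by blast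

lemma ip_diff1: "ip (x - y) z = ip x z - ip y z"
  by (rule add_hom_diff[where f="\<lambda>x. ip x z"]) (rule ip_add1)
lemma ip_minus1: "ip (- x) z = - ip x z"
  by (rule add_hom_minus[where f="\<lambda>x. ip x z"]) (rule ip_add1)
lemma ip_zero1[simp]: "ip 0 z = 0"
  by (rule add_hom_zero[where f="\<lambda>x. ip x z"]) (rule ip_add1)
lemma ip_add2: "ip z (x + y) = ip z x + ip z y"
  proof -
  have "cnj (ip z (x + y)) = cnj (ip z x + ip z y)" by (simp add: ip_cnj[symmetric] ip_add1)
  thus ?thesis by (simp only: complex_cnj_cancel_iff)
qed
lemma ip_diff2: "ip z (x - y) = ip z x - ip z y"
  proof -
  have "cnj (ip z (x - y)) = cnj (ip z x - ip z y)" by (simp add: ip_cnj[symmetric] ip_diff1)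
  thus ?thesis by (simp only: complex_cnj_cancel_iff)
qed
lemma ip_minus2: "ip z (- x) = - ip z x"
  proof -
  have "cnj (ip z (- x)) = cnj (- ip z x)" by (simp add: ip_cnj[symmetric] ip_minus1)
  thus ?thesis by (simp only: complex_cnj_cancel_iff)
qed
lemma ip_zero2[simp]: "ip z 0 = 0"
  using ip_cnj[of 0 z] by simp
lemma ip_scale2: "ip x (s c y) = cnj c * ip x y"
  proof -
  have "cnj (ip x (s c y)) = cnj (cnj c * ip x y)" by (simp add: ip_cnj[symmetric] ip_scale1)
  thus ?thesis by (simp only: complex_cnj_cancel_iff)
qed
lemma ip_real: "ip x x = complex_of_real (Re (ip x x))"
proof -
  have "cnj (ip x x) = ip x x" using ip_cnj[of x x] by simp
  hence "Im (ip x x) = 0" by (metis cnj.sel(2) neg_equal_zero)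
  thus ?thesis by (simp add: complex_eq_iff)
qed
lemma ip_eq0_iff: "ip x x = 0 \<longleftrightarrow> x = 0"
  using ip_def0 by auto

abbreviation nrm where "nrm \<equiv> hnorm ip"
lemma nrm_sq: "(nrm x)^2 = Re (ip x x)" unfolding hnorm_def using ip_pos by simp
lemma nrm_nonneg: "0 \<le> nrm x" unfolding hnorm_def using ip_pos by simp
lemma nrm_zero_iff: "nrm x = 0 \<longleftrightarrow> x = 0"
proof
  assume "nrm x = 0"
  hence "Re (ip x x) = 0" unfolding hnorm_def using ip_pos by simp
  hence "ip x x = 0" using ip_real by (metis of_real_0)
  thus "x = 0" by (rule ip_def0)
qed (simp add: hnorm_def ip_pos)


lemma ip_sub_scale: "ip (x - s t y) w = ip x w - t * ip y w"
  by (simp add: ip_diff1 ip_scale1)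
lemma ip_sub_scale2: "ip w (x - s t y) = ip w x - cnj t * ip w y"
  by (simp add: ip_diff2 ip_scale2)

lemma expand: "ip (x - s t y) (x - s t y) = ip x x - cnj t * ip x y - t * ip y x + t * cnj t * ip y y"
  by (simp add: ip_sub_scale ip_sub_scale2 algebra_simps)

lemma key:
  assumes "y \<noteq> 0"
  shows "Re (ip (x - s (ip x y / ip y y) y) (x - s (ip x y / ip y y) y))
         = Re (ip x x) - (cmod (ip x y))^2 / Re (ip y y)"
proof -
  define a where "a = ip x y"
  define r where "r = Re (ip y y)"
  have yy: "ip y y = complex_of_real r" unfolding r_def by (rule ip_real)
  have yy0: "ip y y \<noteq> 0" using assms ip_def0 by blast
  have r0: "r \<noteq> 0"
  proof
    assume "r = 0"
    hence "ip y y = 0" unfolding yy by simp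
    thus False using yy0 by contradiction
  qed
  have yx: "ip y x = cnj a" unfolding a_def by (rule ip_cnj)
  define t where "t = a / complex_of_real r"
  have ct: "cnj t = cnj a / complex_of_real r" unfolding t_def by simp
  have e: "ip (x - s (ip x y / ip y y) y) (x - s (ip x y / ip y y) y)
        = ip x x - cnj t * a - t * cnj a + t * cnj t * complex_of_real r"
    using expand[of x t y] unfolding t_def a_def[symmetric] yx yy .
  have "t * cnj t * complex_of_real r = a * cnj a / complex_of_real r"
    unfolding ct t_def using r0 by simp
  moreover have "cnj t * a = a * cnj a / complex_of_real r" unfolding ct by simp
  moreover have "t * cnj a = a * cnj a / complex_of_real r" unfolding t_def by simp
  ultimately have "ip (x - s (ip x y / ip y y) y) (x - s (ip x y / ip y y) y)
        = ip x x - a * cnj a / complex_of_real r" unfolding e by simp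
  also have "\<dots> = ip x x - complex_of_real ((cmod a)^2 / r)"
    by (simp add: complex_mult_cnj cmod_power2)
  finally show ?thesis unfolding a_def r_def by simp
qed

lemma cauchy_schwarz: "cmod (ip x y) \<le> nrm x * nrm y"
proof (cases "y = 0")
  case True thus ?thesis by (simp add: nrm_nonneg)
next
  case False
  have rpos: "Re (ip y y) > 0"
  proof -
    have "nrm y \<noteq> 0" using False nrm_zero_iff by blast
    hence "nrm y > 0" using nrm_nonneg[of y] by linarith
    hence "(nrm y)^2 > 0" by simp
    thus ?thesis using nrm_sq[of y] by simp
  qed
  have "0 \<le> Re (ip x x) - (cmod (ip x y))^2 / Re (ip y y)"
    using key[OF False, of x] ip_pos[of "x - s (ip x y / ip y y) y"] by linarith
  hence "(cmod (ip x y))^2 \<le> Re (ip x x) * Re (ip y y)"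
    using rpos by (simp add: field_simps)
  also have "\<dots> = (nrm x * nrm y)^2" by (simp add: nrm_sq power_mult_distrib)
  finally show ?thesis
    by (rule power2_le_imp_le) (simp add: nrm_nonneg)
qed

lemma nrm_add: "nrm (x + y) \<le> nrm x + nrm y"
proof -
  have "Re (ip (x + y) (x + y)) = Re (ip x x) + 2 * Re (ip x y) + Re (ip y y)"
    using ip_cnj[of x y] by (simp add: ip_add1 ip_add2)
  also have "\<dots> \<le> Re (ip x x) + 2 * (nrm x * nrm y) + Re (ip y y)"
    using cauchy_schwarz[of x y] complex_Re_le_cmod[of "ip x y"] by simp
  also have "\<dots> = (nrm x + nrm y)^2" by (simp add: nrm_sq power2_sum)
  finally have "(nrm (x + y))^2 \<le> (nrm x + nrm y)^2" by (simp add: nrm_sq)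
  thus ?thesis by (rule power2_le_imp_le) (simp add: nrm_nonneg add_nonneg_nonneg)
qed

lemma nrm_minus: "nrm (- x) = nrm x"
  unfolding hnorm_def by (simp add: ip_minus1 ip_minus2)

lemma nrm_commute: "nrm (x - y) = nrm (y - x)"
  using nrm_minus[of "x - y"] by simp

lemma nrm_tri: "nrm (x - z) \<le> nrm (x - y) + nrm (y - z)"
  using nrm_add[of "x - y" "y - z"] by simp

lemma nrm_scale: "nrm (s c x) = cmod c * nrm x"
proof -
  have "ip (s c x) (s c x) = c * cnj c * ip x x" by (simp add: ip_scale1 ip_scale2)
  hence "Re (ip (s c x) (s c x)) = (cmod c)^2 * Re (ip x x)"
  proof -
    have "c * cnj c = complex_of_real ((cmod c)^2)" by (simp add: complex_mult_cnj cmod_power2)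
    thus ?thesis using \<open>ip (s c x) (s c x) = c * cnj c * ip x x\<close> by simp
  qed
  thus ?thesis unfolding hnorm_def by (simp add: real_sqrt_mult)
qed

lemma nrm_zero[simp]: "nrm 0 = 0" using nrm_zero_iff by simp


lemma ip_pos_strict: "z \<noteq> 0 \<Longrightarrow> Re (ip z z) > 0"
proof -
  assume "z \<noteq> 0"
  hence "nrm z \<noteq> 0" using nrm_zero_iff by blast
  hence "nrm z > 0" using nrm_nonneg[of z] by linarith
  hence "(nrm z)^2 > 0" by simp
  thus ?thesis using nrm_sq[of z] by simp
qed

lemma scale_diff: "s c (x - y) = s c x - s c y"
  by (rule add_hom_diff[where f="s c"]) (rule V.scale_right_distrib)
lemma scale_two: "s 2 x = x + x"
  using V.scale_left_distrib[of 1 1 x] by simp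

lemma parallelogram: "(nrm (a + b))^2 + (nrm (a - b))^2 = 2*(nrm a)^2 + 2*(nrm b)^2"
  unfolding nrm_sq by (simp add: ip_add1 ip_add2 ip_diff1 ip_diff2 algebra_simps)

definition closed_sub :: "'h set \<Rightarrow> bool" where
  "closed_sub M \<longleftrightarrow> 0 \<in> M \<and> (\<forall>x\<in>M. \<forall>y\<in>M. x + y \<in> M) \<and> (\<forall>c. \<forall>x\<in>M. s c x \<in> M)
     \<and> (\<forall>X l. (\<forall>n. X n \<in> M) \<and> (\<lambda>n. nrm (X n - l)) \<longlonglongrightarrow> 0 \<longrightarrow> l \<in> M)"

lemma mid_ineq:
  assumes cs: "closed_sub M" and mM: "m \<in> M" and m'M: "m' \<in> M"
    and dlow: "\<forall>z\<in>M. d \<le> nrm (x - z)" and d0: "0 \<le> d"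
  shows "(nrm (m - m'))^2 \<le> 2*(nrm (x - m))^2 + 2*(nrm (x - m'))^2 - 4*d^2"
proof -
  define z where "z = s (1/2) (m + m')"
  have zM: "z \<in> M" using cs mM m'M unfolding closed_sub_def z_def by blast
  have "(x - m) + (x - m') = s 2 (x - z)"
    unfolding z_def by (simp add: scale_diff scale_two algebra_simps)
  hence "nrm ((x - m) + (x - m')) = 2 * nrm (x - z)" by (simp add: nrm_scale)
  moreover have "d \<le> nrm (x - z)" using dlow zM by blast
  ultimately have "2 * d \<le> nrm ((x - m) + (x - m'))" by simp
  hence "(2 * d)^2 \<le> (nrm ((x - m) + (x - m')))^2"
    using d0 by (intro power_mono) auto
  moreover have "(nrm ((x - m) + (x - m')))^2 + (nrm ((x - m) - (x - m')))^2
       = 2*(nrm (x - m))^2 + 2*(nrm (x - m'))^2" by (rule parallelogram)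
  moreover have "nrm ((x - m) - (x - m')) = nrm (m - m')"
    using nrm_commute[of m' m] by simp
  ultimately show ?thesis by (simp add: power_mult_distrib)
qed


lemma proj:
  assumes cs: "closed_sub M"
  shows "\<exists>m\<in>M. \<forall>z\<in>M. ip (x - m) z = 0"
proof -
  define D where "D = (\<lambda>m. nrm (x - m)) ` M"
  define d where "d = Inf D"
  have M0: "0 \<in> M" using cs unfolding closed_sub_def by blast
  have Dne: "D \<noteq> {}" using M0 unfolding D_def by blast
  have bdd: "bdd_below D" unfolding D_def bdd_below_def using nrm_nonneg by blast
  have dle: "\<forall>z\<in>M. d \<le> nrm (x - z)"
    unfolding d_def D_def using bdd[unfolded D_def] by (auto intro: cInf_lower)
  have d0: "0 \<le> d" unfolding d_def using Dne by (rule cInf_greatest) (auto simp: D_def nrm_nonneg)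
  define e where "e = (\<lambda>n::nat. inverse (real (Suc n)))"
  have epos: "\<And>n. 0 < e n" unfolding e_def by simp
  have e1: "\<And>n. e n \<le> 1" unfolding e_def by (simp add: inverse_le_1_iff)
  have emono: "\<And>n k. n \<le> k \<Longrightarrow> e k \<le> e n" unfolding e_def
    by (simp add: le_imp_inverse_le)
  have "\<forall>n. \<exists>m. m \<in> M \<and> nrm (x - m) < d + e n"
  proof
    fix n
    have "Inf D < d + e n" using epos[of n] unfolding d_def by simp
    from cInf_lessD[OF Dne this] show "\<exists>m. m \<in> M \<and> nrm (x - m) < d + e n"
      unfolding D_def by blast
  qed
  from choice[OF this] obtain X where X: "\<And>n. X n \<in> M" "\<And>n. nrm (x - X n) < d + e n"
    by blast
  have sq: "(nrm (x - X n))^2 \<le> d^2 + 2*d*e n + e n" for n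
  proof -
    have "(nrm (x - X n))^2 \<le> (d + e n)^2"
      using X(2)[of n] nrm_nonneg by (intro power_mono) auto
    moreover have "(d + e n)^2 = d^2 + 2*d*e n + e n * e n" by (simp add: power2_eq_square algebra_simps)
    moreover have "e n * e n \<le> e n" using e1[of n] epos[of n] by (simp add: mult_left_le)
    ultimately show ?thesis by linarith
  qed
  have cauchy: "(nrm (X n - X k))^2 \<le> (4*d+2) * (e n + e k)" for n k
  proof -
    have "(nrm (X n - X k))^2 \<le> 2*(nrm (x - X n))^2 + 2*(nrm (x - X k))^2 - 4*d^2"
      by (rule mid_ineq[OF cs X(1) X(1) dle d0])
    thus ?thesis using sq[of n] sq[of k] by (simp add: algebra_simps)
  qed
  have "\<forall>\<epsilon>>0. \<exists>N. \<forall>m\<ge>N. \<forall>n\<ge>N. nrm (X m - X n) < \<epsilon>"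
  proof (intro allI impI)
    fix \<epsilon> :: real assume ep: "\<epsilon> > 0"
    obtain N where N: "(8*d+4) / \<epsilon>^2 < real N" using reals_Archimedean2 by blast
    have eN: "(8*d+4) * e N < \<epsilon>^2"
    proof -
      have "(8*d+4) < \<epsilon>^2 * real N" using N ep by (simp add: field_simps)
      also have "\<dots> < \<epsilon>^2 * real (Suc N)" using ep by simp
      finally show ?thesis unfolding e_def using ep by (simp add: field_simps)
    qed
    show "\<exists>N. \<forall>m\<ge>N. \<forall>n\<ge>N. nrm (X m - X n) < \<epsilon>"
    proof (intro exI allI impI)
      fix m n assume mN: "N \<le> m" and nN: "N \<le> n"
      have "(nrm (X m - X n))^2 \<le> (4*d+2) * (e m + e n)" by (rule cauchy)
      also have "\<dots> \<le> (4*d+2) * (e N + e N)"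
        using emono[OF mN] emono[OF nN] d0 by (intro mult_left_mono) auto
      also have "\<dots> = (8*d+4) * e N" by (simp add: algebra_simps)
      also have "\<dots> < \<epsilon>^2" by (rule eN)
      finally show "nrm (X m - X n) < \<epsilon>"
        using ep by (rule power2_less_imp_less[OF _ less_imp_le])
    qed
  qed
  from complete[OF this] obtain m where lim: "(\<lambda>n. nrm (X n - m)) \<longlonglongrightarrow> 0" by blast
  have mM: "m \<in> M" using cs X(1) lim unfolding closed_sub_def by blast
  have "nrm (x - m) \<le> d"
  proof (rule LIMSEQ_le_const)
    have "(\<lambda>n. d + e n + nrm (X n - m)) \<longlonglongrightarrow> d + 0 + 0"
      unfolding e_def by (intro tendsto_add tendsto_const LIMSEQ_inverse_real_of_nat lim)
    thus "(\<lambda>n. d + e n + nrm (X n - m)) \<longlonglongrightarrow> d" by simp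
    show "\<exists>N. \<forall>n\<ge>N. nrm (x - m) \<le> d + e n + nrm (X n - m)"
    proof (intro exI allI impI)
      fix n
      have "nrm (x - m) \<le> nrm (x - X n) + nrm (X n - m)" by (rule nrm_tri)
      thus "nrm (x - m) \<le> d + e n + nrm (X n - m)" using X(2)[of n] by linarith
    qed
  qed
  hence minim: "\<forall>z\<in>M. nrm (x - m) \<le> nrm (x - z)" using dle by fastforce
  have "\<forall>z\<in>M. ip (x - m) z = 0"
  proof
    fix z assume zM: "z \<in> M"
    show "ip (x - m) z = 0"
    proof (cases "z = 0")
      case True thus ?thesis by simp
    next
      case False
      define y where "y = x - m"
      define t where "t = ip y z / ip z z"
      have "m + s t z \<in> M" using cs mM zM unfolding closed_sub_def by blast
      hence "nrm y \<le> nrm (x - (m + s t z))" using minim unfolding y_def by blast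
      moreover have "x - (m + s t z) = y - s t z" unfolding y_def by (simp add: algebra_simps)
      ultimately have "nrm y \<le> nrm (y - s t z)" by simp
      hence "(nrm y)^2 \<le> (nrm (y - s t z))^2" using nrm_nonneg by (intro power_mono) auto
      hence "Re (ip y y) \<le> Re (ip y y) - (cmod (ip y z))^2 / Re (ip z z)"
        using key[OF False, of y] unfolding nrm_sq t_def by simp
      hence "(cmod (ip y z))^2 / Re (ip z z) \<le> 0" by simp
      moreover have "Re (ip z z) > 0" using ip_pos_strict[OF False] .
      ultimately have "(cmod (ip y z))^2 \<le> 0" by (simp add: divide_le_0_iff)
      hence "cmod (ip y z) = 0" by simp
      thus ?thesis unfolding y_def by simp
    qed
  qed
  thus ?thesis using mM by blast
qed


lemma riesz:
  assumes add: "\<And>x y. H (x + y) = H x + H y" and sc: "\<And>c x. H (s c x) = c * H x"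
    and bd: "\<And>x. cmod (H x) \<le> C * nrm x"
  shows "\<exists>r. \<forall>x. H x = ip x r"
proof (cases "\<forall>x. H x = 0")
  case True thus ?thesis by (intro exI[of _ 0]) simp
next
  case False
  then obtain z where Hz: "H z \<noteq> 0" by blast
  have H0: "H 0 = 0" by (rule add_hom_zero) (rule add)
  have Hdiff: "\<And>x y. H (x - y) = H x - H y" by (rule add_hom_diff) (rule add)
  define K where "K = {x. H x = 0}"
  have cs: "closed_sub K"
    unfolding closed_sub_def
  proof (intro conjI allI impI ballI)
    show "0 \<in> K" using H0 unfolding K_def by simp
    show "\<And>x y. x \<in> K \<Longrightarrow> y \<in> K \<Longrightarrow> x + y \<in> K" unfolding K_def using add by simp
    show "\<And>c x. x \<in> K \<Longrightarrow> s c x \<in> K" unfolding K_def using sc by simp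
    fix X l assume a: "(\<forall>n. X n \<in> K) \<and> (\<lambda>n. nrm (X n - l)) \<longlonglongrightarrow> 0"
    have "cmod (H l) \<le> 0"
    proof (rule LIMSEQ_le_const)
      have "(\<lambda>n. C * nrm (X n - l)) \<longlonglongrightarrow> C * 0"
        using a by (intro tendsto_mult tendsto_const) auto
      thus "(\<lambda>n. C * nrm (X n - l)) \<longlonglongrightarrow> 0" by simp
      show "\<exists>N. \<forall>n\<ge>N. cmod (H l) \<le> C * nrm (X n - l)"
      proof (intro exI allI impI)
        fix n
        have "H l = H (l - X n)" using a Hdiff[of l "X n"] unfolding K_def by simp
        hence "cmod (H l) \<le> C * nrm (l - X n)" using bd by simp
        thus "cmod (H l) \<le> C * nrm (X n - l)" using nrm_commute[of l "X n"] by simp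
      qed
    qed
    thus "l \<in> K" unfolding K_def by simp
  qed
  from proj[OF cs, of z] obtain m where mK: "m \<in> K" and orth: "\<forall>k\<in>K. ip (z - m) k = 0" by blast
  define y where "y = z - m"
  have Hy: "H y = H z" unfolding y_def using Hdiff mK unfolding K_def by simp
  hence Hy0: "H y \<noteq> 0" using Hz by simp
  have y0: "y \<noteq> 0" using Hy0 H0 by auto
  have yy0: "ip y y \<noteq> 0" using y0 ip_def0 by blast
  define r where "r = s (cnj (H y / ip y y)) y"
  have "H x = ip x r" for x
  proof -
    define k where "k = x - s (H x / H y) y"
    have "H k = 0" unfolding k_def using Hdiff sc Hy0 by simp
    hence "ip y k = 0" using orth unfolding K_def y_def by simp
    hence "ip k y = 0" using ip_cnj[of y k] by simp
    hence "ip x y - (H x / H y) * ip y y = 0" unfolding k_def by (simp add: ip_sub_scale)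
    hence "H x = (H y / ip y y) * ip x y" using yy0 Hy0 by (simp add: field_simps)
    thus ?thesis unfolding r_def by (simp add: ip_scale2)
  qed
  thus ?thesis by blast
qed


end

lemma sup_bound:
  fixes f n :: "'a::zero \<Rightarrow> real"
  assumes s: "ereal a \<le> (SUP w\<in>{w. w \<noteq> 0}. ereal (f w / n w))"
    and np: "\<And>w. w \<noteq> 0 \<Longrightarrow> n w > 0" and fb: "\<And>w. f w \<le> K * n w"
  shows "a \<le> K"
proof -
  have "(SUP w\<in>{w. w \<noteq> 0}. ereal (f w / n w)) \<le> ereal K"
  proof (rule SUP_least)
    fix w :: 'a assume "w \<in> {w. w \<noteq> 0}"
    hence "n w > 0" using np by simp
    hence "f w / n w \<le> K" using fb[of w] by (simp add: divide_le_eq)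
    thus "ereal (f w / n w) \<le> ereal K" by simp
  qed
  with s have "ereal a \<le> ereal K" by (rule order_trans)
  thus ?thesis by simp
qed

lemma blm:
  assumes h1: "chs s1 ip1" and h2: "chs s2 ip2"
    and Badd2: "\<And>u v w. B u (v + w) = B u v + B u w" and Bsc2: "\<And>u c v. B u (s2 c v) = c * B u v"
    and Badd1: "\<And>u v w. B (u + v) w = B u w + B v w" and Bsc1: "\<And>u c v. B (s1 c u) v = c * B u v"
    and Bbd: "\<And>u v. cmod (B u v) \<le> CB * hnorm ip1 u * hnorm ip2 v"
    and inf1: "\<And>v. ereal (lam * hnorm ip2 v) \<le> (SUP w\<in>{w. w \<noteq> 0}. ereal (cmod (B w v) / hnorm ip1 w))"
    and inf2: "\<And>u. ereal (lam * hnorm ip1 u) \<le> (SUP w\<in>{w. w \<noteq> 0}. ereal (cmod (B u w) / hnorm ip2 w))"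
    and lam: "lam > 0"
    and Hadd: "\<And>x y. H (x + y) = H x + H y" and Hsc: "\<And>c x. H (s1 c x) = c * H x"
    and Hbd: "\<And>x. cmod (H x) \<le> C * hnorm ip1 x"
  shows "\<exists>u. \<forall>\<phi>. B \<phi> u = H \<phi>"
proof -
  interpret h1: chs s1 ip1 by (rule h1)
  interpret h2: chs s2 ip2 by (rule h2)
  have np1: "\<And>w. w \<noteq> 0 \<Longrightarrow> h1.nrm w > 0"
    using h1.nrm_nonneg h1.nrm_zero_iff by (metis less_eq_real_def)
  have np2: "\<And>w. w \<noteq> 0 \<Longrightarrow> h2.nrm w > 0"
    using h2.nrm_nonneg h2.nrm_zero_iff by (metis less_eq_real_def)
  have B0: "\<And>u. B u 0 = 0" by (rule add_hom_zero) (rule Badd2)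
  have Bdiff2: "\<And>u v w. B u (v - w) = B u v - B u w" by (rule add_hom_diff) (rule Badd2)
  define M where "M = {k. \<exists>v. \<forall>\<phi>. B \<phi> v = ip1 \<phi> k}"
  have cs: "h1.closed_sub M"
    unfolding h1.closed_sub_def
  proof (intro conjI allI impI ballI)
    show "0 \<in> M" unfolding M_def using B0 by (intro CollectI exI[of _ 0]) simp
    fix x y assume "x \<in> M" "y \<in> M"
    then obtain vx vy where "\<forall>\<phi>. B \<phi> vx = ip1 \<phi> x" "\<forall>\<phi>. B \<phi> vy = ip1 \<phi> y" unfolding M_def by blast
    thus "x + y \<in> M" unfolding M_def
      by (intro CollectI exI[of _ "vx + vy"]) (simp add: Badd2 h1.ip_add2)
  next
    fix c x assume "x \<in> M"
    then obtain vx where "\<forall>\<phi>. B \<phi> vx = ip1 \<phi> x" unfolding M_def by blast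
    thus "s1 c x \<in> M" unfolding M_def
      by (intro CollectI exI[of _ "s2 (cnj c) vx"]) (simp add: Bsc2 h1.ip_scale2)
  next
    fix X l assume a: "(\<forall>n. X n \<in> M) \<and> (\<lambda>n. h1.nrm (X n - l)) \<longlonglongrightarrow> 0"
    hence "\<forall>n. \<exists>v. \<forall>\<phi>. B \<phi> v = ip1 \<phi> (X n)" unfolding M_def by blast
    from choice[OF this] obtain V where V: "\<And>n \<phi>. B \<phi> (V n) = ip1 \<phi> (X n)" by blast
    have lim: "(\<lambda>n. h1.nrm (X n - l)) \<longlonglongrightarrow> 0" using a by blast
    have Vb: "lam * h2.nrm (V n - V m) \<le> h1.nrm (X n - X m)" for n m
    proof (rule sup_bound[OF inf1 np1])
      fix w
      have "B w (V n - V m) = ip1 w (X n - X m)" by (simp add: Bdiff2 V h1.ip_diff2)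
      thus "cmod (B w (V n - V m)) \<le> h1.nrm (X n - X m) * h1.nrm w"
        using h1.cauchy_schwarz[of w "X n - X m"] by (simp add: mult.commute)
    qed
    have "\<forall>e>0. \<exists>N. \<forall>m\<ge>N. \<forall>n\<ge>N. h2.nrm (V m - V n) < e"
    proof (intro allI impI)
      fix e :: real assume e: "e > 0"
      have "lam * e / 2 > 0" using e lam by simp
      from LIMSEQ_D[OF lim this] obtain N where N: "\<And>n. n \<ge> N \<Longrightarrow> norm (h1.nrm (X n - l) - 0) < lam * e / 2" by blast
      show "\<exists>N. \<forall>m\<ge>N. \<forall>n\<ge>N. h2.nrm (V m - V n) < e"
      proof (intro exI allI impI)
        fix m n assume "N \<le> m" "N \<le> n"
        hence "h1.nrm (X m - l) < lam * e / 2" "h1.nrm (X n - l) < lam * e / 2" using N[of m] N[of n] h1.nrm_nonneg[of "X m - l"] h1.nrm_nonneg[of "X n - l"] by auto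
        moreover have "h1.nrm (X m - X n) \<le> h1.nrm (X m - l) + h1.nrm (l - X n)" by (rule h1.nrm_tri)
        moreover have "h1.nrm (l - X n) = h1.nrm (X n - l)" by (rule h1.nrm_commute)
        ultimately have "lam * h2.nrm (V m - V n) < lam * e" using Vb[of m n] by linarith
        thus "h2.nrm (V m - V n) < e" using lam by simp
      qed
    qed
    from h2.complete[OF this] obtain v where vlim: "(\<lambda>n. h2.nrm (V n - v)) \<longlonglongrightarrow> 0" by blast
    have "B \<phi> v = ip1 \<phi> l" for \<phi>
    proof -
      have "cmod (B \<phi> v - ip1 \<phi> l) \<le> 0"
      proof (rule LIMSEQ_le_const)
        have "(\<lambda>n. CB * h1.nrm \<phi> * h2.nrm (V n - v) + h1.nrm \<phi> * h1.nrm (X n - l))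
               \<longlonglongrightarrow> CB * h1.nrm \<phi> * 0 + h1.nrm \<phi> * 0"
          by (intro tendsto_add tendsto_mult tendsto_const vlim lim)
        thus "(\<lambda>n. CB * h1.nrm \<phi> * h2.nrm (V n - v) + h1.nrm \<phi> * h1.nrm (X n - l)) \<longlonglongrightarrow> 0" by simp
        show "\<exists>N. \<forall>n\<ge>N. cmod (B \<phi> v - ip1 \<phi> l) \<le> CB * h1.nrm \<phi> * h2.nrm (V n - v) + h1.nrm \<phi> * h1.nrm (X n - l)"
        proof (intro exI allI impI)
          fix n
          have "B \<phi> v - ip1 \<phi> l = - B \<phi> (V n - v) + ip1 \<phi> (X n - l)"
            by (simp add: Bdiff2 V h1.ip_diff2)
          hence "cmod (B \<phi> v - ip1 \<phi> l) \<le> cmod (B \<phi> (V n - v)) + cmod (ip1 \<phi> (X n - l))"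
            by (metis norm_minus_cancel norm_triangle_ineq)
          also have "\<dots> \<le> CB * h1.nrm \<phi> * h2.nrm (V n - v) + h1.nrm \<phi> * h1.nrm (X n - l)"
            using Bbd[of \<phi> "V n - v"] h1.cauchy_schwarz[of \<phi> "X n - l"] by linarith
          finally show "cmod (B \<phi> v - ip1 \<phi> l) \<le> CB * h1.nrm \<phi> * h2.nrm (V n - v) + h1.nrm \<phi> * h1.nrm (X n - l)" .
        qed
      qed
      thus ?thesis by simp
    qed
    thus "l \<in> M" unfolding M_def by blast
  qed
  from h1.riesz[OF Hadd Hsc Hbd] obtain h where h: "\<And>x. H x = ip1 x h" by blast
  from h1.proj[OF cs, of h] obtain m where mM: "m \<in> M" and orth: "\<forall>k\<in>M. ip1 (h - m) k = 0" by blast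
  have "\<forall>w. B (h - m) w = 0"
  proof
    fix w
    have "\<exists>r. \<forall>x. B x w = ip1 x r"
    proof (rule h1.riesz)
      show "\<And>x y. B (x + y) w = B x w + B y w" by (rule Badd1)
      show "\<And>c x. B (s1 c x) w = c * B x w" by (rule Bsc1)
      show "\<And>x. cmod (B x w) \<le> (CB * h2.nrm w) * h1.nrm x" using Bbd by (simp add: algebra_simps)
    qed
    then obtain r where r: "\<And>x. B x w = ip1 x r" by blast
    hence "r \<in> M" unfolding M_def by blast
    thus "B (h - m) w = 0" using orth r by simp
  qed
  hence "lam * h1.nrm (h - m) \<le> 0"
    by (intro sup_bound[OF inf2 np2]) auto
  hence "h1.nrm (h - m) \<le> 0" using lam by (simp add: mult_le_0_iff)
  hence "h - m = 0" using h1.nrm_nonneg[of "h - m"] h1.nrm_zero_iff by simp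
  hence "h \<in> M" using mM by simp
  thus ?thesis unfolding M_def using h by auto
qed


lemma blm_unique:
  assumes h1: "chs s1 ip1" and h2: "chs s2 ip2"
    and Badd2: "\<And>u v w. B u (v + w) = B u v + B u w"
    and inf1: "\<And>v. ereal (lam * hnorm ip2 v) \<le> (SUP w\<in>{w. w \<noteq> 0}. ereal (cmod (B w v) / hnorm ip1 w))"
    and lam: "lam > 0"
    and eq: "\<And>\<phi>. B \<phi> u = B \<phi> u'"
  shows "u = u'"
proof -
  interpret h1: chs s1 ip1 by (rule h1)
  interpret h2: chs s2 ip2 by (rule h2)
  have np1: "\<And>w. w \<noteq> 0 \<Longrightarrow> h1.nrm w > 0"
    using h1.nrm_nonneg h1.nrm_zero_iff by (metis less_eq_real_def)
  have Bdiff2: "\<And>u v w. B u (v - w) = B u v - B u w" by (rule add_hom_diff) (rule Badd2)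
  have "lam * h2.nrm (u - u') \<le> 0"
  proof (rule sup_bound[OF inf1 np1])
    fix w
    have "B w (u - u') = 0" using Bdiff2[of w u u'] eq[of w] by simp
    thus "cmod (B w (u - u')) \<le> 0 * h1.nrm w" by simp
  qed
  hence "h2.nrm (u - u') \<le> 0" using lam by (simp add: mult_le_0_iff)
  hence "u - u' = 0" using h2.nrm_nonneg[of "u - u'"] h2.nrm_zero_iff by simp
  thus ?thesis by simp
qed

lemma conormal_eq:
  assumes wd: "\<And>\<phi> \<psi>. Tr1 \<phi> = Tr1 \<psi> \<Longrightarrow> BO (rO1 \<phi>) u = BO (rO1 \<psi>) u"
  shows "conormal BO rO1 Tr1 u (Tr1 \<phi>) = BO (rO1 \<phi>) u"
proof -
  define G where "G = (\<lambda>x. if x \<in> range Tr1 then BO (rO1 (SOME \<phi>. Tr1 \<phi> = x)) u else 0)"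
  have PG: "(\<forall>\<phi>. G (Tr1 \<phi>) = BO (rO1 \<phi>) u) \<and> (\<forall>x. x \<notin> range Tr1 \<longrightarrow> G x = 0)"
  proof (intro conjI allI impI)
    fix \<phi>
    have "Tr1 (SOME \<psi>. Tr1 \<psi> = Tr1 \<phi>) = Tr1 \<phi>" by (rule someI) (rule refl)
    from wd[OF this] show "G (Tr1 \<phi>) = BO (rO1 \<phi>) u" unfolding G_def by simp
  qed (simp add: G_def)
  have "\<exists>!g. (\<forall>\<phi>. g (Tr1 \<phi>) = BO (rO1 \<phi>) u) \<and> (\<forall>x. x \<notin> range Tr1 \<longrightarrow> g x = 0)"
  proof (rule ex1I[of _ G])
    show "(\<forall>\<phi>. G (Tr1 \<phi>) = BO (rO1 \<phi>) u) \<and> (\<forall>x. x \<notin> range Tr1 \<longrightarrow> G x = 0)" by (rule PG)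
    fix g assume g: "(\<forall>\<phi>. g (Tr1 \<phi>) = BO (rO1 \<phi>) u) \<and> (\<forall>x. x \<notin> range Tr1 \<longrightarrow> g x = 0)"
    show "g = G"
    proof
      fix x show "g x = G x" using g PG by (cases "x \<in> range Tr1") auto
    qed
  qed
  from theI'[OF this] show ?thesis unfolding conormal_def by blast
qed

theorem lemma5p4:
  fixes s1 :: "complex \<Rightarrow> 'h1::ab_group_add \<Rightarrow> 'h1" and ip1 :: "'h1 \<Rightarrow> 'h1 \<Rightarrow> complex"
    and s2 :: "complex \<Rightarrow> 'h2::ab_group_add \<Rightarrow> 'h2" and ip2 :: "'h2 \<Rightarrow> 'h2 \<Rightarrow> complex"
    and sO1 :: "complex \<Rightarrow> 'o1::ab_group_add \<Rightarrow> 'o1" and nO1 :: "'o1 \<Rightarrow> real"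
    and sC1 :: "complex \<Rightarrow> 'c1::ab_group_add \<Rightarrow> 'c1" and nC1 :: "'c1 \<Rightarrow> real"
    and sD1 :: "complex \<Rightarrow> 'd1::ab_group_add \<Rightarrow> 'd1" and nD1 :: "'d1 \<Rightarrow> real"
    and sO2 :: "complex \<Rightarrow> 'o2::ab_group_add \<Rightarrow> 'o2" and nO2 :: "'o2 \<Rightarrow> real"
    and sC2 :: "complex \<Rightarrow> 'c2::ab_group_add \<Rightarrow> 'c2" and nC2 :: "'c2 \<Rightarrow> real"
    and sD2 :: "complex \<Rightarrow> 'd2::ab_group_add \<Rightarrow> 'd2" and nD2 :: "'d2 \<Rightarrow> real"
    and Tr1 :: "'h1 \<Rightarrow> 'd1" and rO1 :: "'h1 \<Rightarrow> 'o1" and rC1 :: "'h1 \<Rightarrow> 'c1"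
    and Tr2 :: "'h2 \<Rightarrow> 'd2" and rO2 :: "'h2 \<Rightarrow> 'o2" and rC2 :: "'h2 \<Rightarrow> 'c2"
    and B :: "'h1 \<Rightarrow> 'h2 \<Rightarrow> complex"
    and BO :: "'o1 \<Rightarrow> 'o2 \<Rightarrow> complex" and BC :: "'c1 \<Rightarrow> 'c2 \<Rightarrow> complex"
    and lam :: real
  assumes H1: "complex_hilbert s1 ip1" and H2: "complex_hilbert s2 ip2"
    and sn: "seminormed sO1 nO1" "seminormed sC1 nC1" "seminormed sD1 nD1"
            "seminormed sO2 nO2" "seminormed sC2 nC2" "seminormed sD2 nD2"
    and ops: "bounded_op s1 (hnorm ip1) sD1 nD1 Tr1"
             "bounded_op s1 (hnorm ip1) sO1 nO1 rO1"
             "bounded_op s1 (hnorm ip1) sC1 nC1 rC1"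
             "bounded_op s2 (hnorm ip2) sD2 nD2 Tr2"
             "bounded_op s2 (hnorm ip2) sO2 nO2 rO2"
             "bounded_op s2 (hnorm ip2) sC2 nC2 rC2"
    and B_bdd: "bounded_bilinear_form s1 (hnorm ip1) s2 (hnorm ip2) B"
    and BO_bdd: "bounded_bilinear_form s1 (hnorm ip1) s2 (hnorm ip2) (\<lambda>F G. BO (rO1 F) (rO2 G))"
    and BC_bdd: "bounded_bilinear_form s1 (hnorm ip1) s2 (hnorm ip2) (\<lambda>F G. BC (rC1 F) (rC2 G))"
    and lam_pos: "lam > 0"
    and infsup1: "\<And>v. ereal (lam * hnorm ip2 v)
                      \<le> (SUP w\<in>{w. w \<noteq> 0}. ereal (cmod (B w v) / hnorm ip1 w))"
    and infsup2: "\<And>u. ereal (lam * hnorm ip1 u)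
                      \<le> (SUP w\<in>{w. w \<noteq> 0}. ereal (cmod (B u w) / hnorm ip2 w))"
    and split: "\<And>u v. B u v = BO (rO1 u) (rO2 v) + BC (rC1 u) (rC2 v)"
    and glue1: "\<And>\<phi> \<psi>. Tr1 \<phi> = Tr1 \<psi> \<Longrightarrow>
                  \<exists>w. rO1 w = rO1 \<phi> \<and> rC1 w = rC1 \<psi> \<and> Tr1 w = Tr1 \<phi>"
    and glue2: "\<And>\<phi> \<psi>. Tr2 \<phi> = Tr2 \<psi> \<Longrightarrow>
                  \<exists>w. rO2 w = rO2 \<phi> \<and> rC2 w = rC2 \<psi> \<and> Tr2 w = Tr2 \<phi>"
  shows "(\<forall>f\<in>range Tr2.
            trace_double_layer B BO rO1 rO2 Tr2 f + trace_double_layer B BC rC1 rC2 Tr2 f = - f)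
       \<and> (\<forall>g. in_N2 s1 ip1 Tr1 g \<longrightarrow>
            (\<forall>x\<in>range Tr1.
               conormal BO rO1 Tr1 (rO2 (single_layer B Tr1 g)) x
             + conormal BC rC1 Tr1 (rC2 (single_layer B Tr1 g)) x = g x))
       \<and> (\<forall>f\<in>range Tr2. \<forall>x\<in>range Tr1.
               conormal BO rO1 Tr1 (double_layer B BO rO1 rO2 Tr2 f) x
             - conormal BC rC1 Tr1 (double_layer B BC rC1 rC2 Tr2 f) x = 0)
       \<and> (\<forall>TrO TrC. partial_trace s2 ip2 rO2 sD2 Tr2 TrO \<and> partial_trace s2 ip2 rC2 sD2 Tr2 TrC \<longrightarrow>
            (\<forall>g. in_N2 s1 ip1 Tr1 g \<longrightarrow>
               TrO (rO2 (single_layer B Tr1 g)) - TrC (rC2 (single_layer B Tr1 g)) = 0))"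
proof -
  interpret h1: chs s1 ip1 using H1 by (simp add: chs_def)
  interpret h2: chs s2 ip2 using H2 by (simp add: chs_def)
  have h1c: "chs s1 ip1" using H1 by (simp add: chs_def)
  have h2c: "chs s2 ip2" using H2 by (simp add: chs_def)
  from B_bdd obtain CB where
      Bl2: "\<And>u. Vector_Spaces.linear s2 (*) (B u)" and Bl1: "\<And>v. Vector_Spaces.linear s1 (*) (\<lambda>u. B u v)"
      and Bbd: "\<And>u v. cmod (B u v) \<le> CB * hnorm ip1 u * hnorm ip2 v"
    unfolding bounded_bilinear_form_def by blast
  from BO_bdd obtain CO where
      Ol2: "\<And>u. Vector_Spaces.linear s2 (*) (\<lambda>G. BO (rO1 u) (rO2 G))"
      and Ol1: "\<And>v. Vector_Spaces.linear s1 (*) (\<lambda>u. BO (rO1 u) (rO2 v))"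
      and Obd: "\<And>u v. cmod (BO (rO1 u) (rO2 v)) \<le> CO * hnorm ip1 u * hnorm ip2 v"
    unfolding bounded_bilinear_form_def by blast
  from BC_bdd obtain CC where
      Cl2: "\<And>u. Vector_Spaces.linear s2 (*) (\<lambda>G. BC (rC1 u) (rC2 G))"
      and Cl1: "\<And>v. Vector_Spaces.linear s1 (*) (\<lambda>u. BC (rC1 u) (rC2 v))"
      and Cbd: "\<And>u v. cmod (BC (rC1 u) (rC2 v)) \<le> CC * hnorm ip1 u * hnorm ip2 v"
    unfolding bounded_bilinear_form_def by blast
  have Badd2: "\<And>u v w. B u (v + w) = B u v + B u w" using Bl2 by (rule lin_add)
  have Badd1: "\<And>u v w. B (u + v) w = B u w + B v w"
    using lin_add[OF Bl1] by simp
  have Bsc2: "\<And>u c v. B u (s2 c v) = c * B u v" using lin_scale[OF Bl2] by simp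
  have Bsc1: "\<And>u c v. B (s1 c u) v = c * B u v" using lin_scale[OF Bl1] by simp
  have Tr2l: "Vector_Spaces.linear s2 sD2 Tr2" using ops(4) unfolding bounded_op_def by blast
  have rO2l: "Vector_Spaces.linear s2 sO2 rO2" using ops(5) unfolding bounded_op_def by blast
  have rC2l: "Vector_Spaces.linear s2 sC2 rC2" using ops(6) unfolding bounded_op_def by blast
  have uniq: "\<And>u u'. (\<And>\<phi>. B \<phi> u = B \<phi> u') \<Longrightarrow> u = u'"
    by (rule blm_unique[OF h1c h2c Badd2 infsup1 lam_pos]) blast
  have NP: "\<forall>\<phi>. B \<phi> (newton_pot B H) = H \<phi>"
    if Hadd: "\<And>x y. H (x + y) = H x + H y" and Hsc: "\<And>c x. H (s1 c x) = c * H x"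
      and Hbd: "\<And>x. cmod (H x) \<le> C * hnorm ip1 x" for H C
  proof -
    from blm[OF h1c h2c Badd2 Bsc2 Badd1 Bsc1 Bbd infsup1 infsup2 lam_pos Hadd Hsc Hbd]
    obtain u where u: "\<forall>\<phi>. B \<phi> u = H \<phi>" by blast
    have "\<exists>!u. \<forall>\<phi>. B \<phi> u = H \<phi>"
      using u uniq by (intro ex1I[of _ u]) auto
    from theI'[OF this] show ?thesis unfolding newton_pot_def .
  qed
  have NPO: "\<forall>\<phi>. B \<phi> (newton_pot B (L_ind BO rO1 (rO2 F))) = BO (rO1 \<phi>) (rO2 F)" for F
  proof -
    have "\<forall>\<phi>. B \<phi> (newton_pot B (\<lambda>\<phi>. BO (rO1 \<phi>) (rO2 F))) = BO (rO1 \<phi>) (rO2 F)"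
    proof (rule NP)
      show "\<And>x y. BO (rO1 (x + y)) (rO2 F) = BO (rO1 x) (rO2 F) + BO (rO1 y) (rO2 F)"
        using lin_add[OF Ol1] by simp
      show "\<And>c x. BO (rO1 (s1 c x)) (rO2 F) = c * BO (rO1 x) (rO2 F)"
        using lin_scale[OF Ol1] by simp
      show "\<And>x. cmod (BO (rO1 x) (rO2 F)) \<le> (CO * hnorm ip2 F) * hnorm ip1 x"
        using Obd by (simp add: algebra_simps)
    qed
    thus ?thesis unfolding L_ind_def .
  qed
  have NPC: "\<forall>\<phi>. B \<phi> (newton_pot B (L_ind BC rC1 (rC2 F))) = BC (rC1 \<phi>) (rC2 F)" for F
  proof -
    have "\<forall>\<phi>. B \<phi> (newton_pot B (\<lambda>\<phi>. BC (rC1 \<phi>) (rC2 F))) = BC (rC1 \<phi>) (rC2 F)"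
    proof (rule NP)
      show "\<And>x y. BC (rC1 (x + y)) (rC2 F) = BC (rC1 x) (rC2 F) + BC (rC1 y) (rC2 F)"
        using lin_add[OF Cl1] by simp
      show "\<And>c x. BC (rC1 (s1 c x)) (rC2 F) = c * BC (rC1 x) (rC2 F)"
        using lin_scale[OF Cl1] by simp
      show "\<And>x. cmod (BC (rC1 x) (rC2 F)) \<le> (CC * hnorm ip2 F) * hnorm ip1 x"
        using Cbd by (simp add: algebra_simps)
    qed
    thus ?thesis unfolding L_ind_def .
  qed
  have Psum: "newton_pot B (L_ind BO rO1 (rO2 F)) + newton_pot B (L_ind BC rC1 (rC2 F)) = F" for F
  proof (rule uniq)
    fix \<phi>
    show "B \<phi> (newton_pot B (L_ind BO rO1 (rO2 F)) + newton_pot B (L_ind BC rC1 (rC2 F))) = B \<phi> F"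
      using NPO[of F] NPC[of F] split[of \<phi> F] by (simp add: Badd2)
  qed
  have P1: "\<forall>f\<in>range Tr2.
            trace_double_layer B BO rO1 rO2 Tr2 f + trace_double_layer B BC rC1 rC2 Tr2 f = - f"
  proof
    fix f assume "f \<in> range Tr2"
    then obtain F0 where "Tr2 F0 = f" by blast
    hence TF: "Tr2 (SOME F. Tr2 F = f) = f" by (rule someI)
    define F where "F = (SOME F. Tr2 F = f)"
    have "Tr2 (newton_pot B (L_ind BO rO1 (rO2 F))) + Tr2 (newton_pot B (L_ind BC rC1 (rC2 F))) = Tr2 F"
      using Psum[of F] lin_add[OF Tr2l] by metis
    thus "trace_double_layer B BO rO1 rO2 Tr2 f + trace_double_layer B BC rC1 rC2 Tr2 f = - f"
      unfolding trace_double_layer_def Let_def F_def[symmetric] using TF[folded F_def]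
      by (simp add: algebra_simps)
  qed
  have P2: "\<forall>g. in_N2 s1 ip1 Tr1 g \<longrightarrow>
            (\<forall>x\<in>range Tr1.
               conormal BO rO1 Tr1 (rO2 (single_layer B Tr1 g)) x
             + conormal BC rC1 Tr1 (rC2 (single_layer B Tr1 g)) x = g x)"
  proof (intro allI impI ballI)
    fix g x assume gN: "in_N2 s1 ip1 Tr1 g" and x: "x \<in> range Tr1"
    from gN obtain Cg where glin: "\<And>\<phi> \<psi> c. g (Tr1 (\<phi> + s1 c \<psi>)) = g (Tr1 \<phi>) + c * g (Tr1 \<psi>)"
      and gbd: "\<And>\<phi>. cmod (g (Tr1 \<phi>)) \<le> Cg * qnorm Tr1 (hnorm ip1) (Tr1 \<phi>)"
      unfolding in_N2_def by blast
    have gadd: "g (Tr1 (a + b)) = g (Tr1 a) + g (Tr1 b)" for a b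
      using glin[of a 1 b] by simp
    have g0: "g (Tr1 0) = 0" using gadd[of 0 0] by simp
    have gsc: "g (Tr1 (s1 c a)) = c * g (Tr1 a)" for c a
      using glin[of 0 c a] g0 by simp
    have gb: "cmod (g (Tr1 a)) \<le> max Cg 0 * hnorm ip1 a" for a
    proof -
      let ?q = "qnorm Tr1 (hnorm ip1) (Tr1 a)"
      have bb: "bdd_below (hnorm ip1 ` {F. Tr1 F = Tr1 a})"
        using h1.nrm_nonneg by (intro bdd_belowI[of _ 0]) auto
      have q1: "?q \<le> hnorm ip1 a" unfolding qnorm_def by (rule cINF_lower[OF bb]) simp
      have q0: "0 \<le> ?q" unfolding qnorm_def by (rule cINF_greatest) (auto simp: h1.nrm_nonneg)
      have "cmod (g (Tr1 a)) \<le> Cg * ?q" by (rule gbd)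
      also have "\<dots> \<le> max Cg 0 * ?q" using q0 by (intro mult_right_mono) auto
      also have "\<dots> \<le> max Cg 0 * hnorm ip1 a" using q1 by (intro mult_left_mono) auto
      finally show ?thesis .
    qed
    define S where "S = single_layer B Tr1 g"
    have "S = newton_pot B (\<lambda>\<phi>. g (Tr1 \<phi>))" unfolding S_def single_layer_def newton_pot_def ..
    hence BS: "\<And>\<phi>. B \<phi> S = g (Tr1 \<phi>)" using NP[of "\<lambda>\<phi>. g (Tr1 \<phi>)", OF gadd gsc gb] by simp
    have wdO: "BO (rO1 \<phi>) (rO2 S) = BO (rO1 \<psi>) (rO2 S)" if tr: "Tr1 \<phi> = Tr1 \<psi>" for \<phi> \<psi>
    proof -
      obtain w where w: "rO1 w = rO1 \<phi>" "rC1 w = rC1 \<psi>" "Tr1 w = Tr1 \<phi>" using glue1[OF tr] by blast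
      have "B w S = B \<psi> S" using BS w tr by simp
      thus ?thesis using split[of w S] split[of \<psi> S] w by simp
    qed
    have wdC: "BC (rC1 \<phi>) (rC2 S) = BC (rC1 \<psi>) (rC2 S)" if tr: "Tr1 \<phi> = Tr1 \<psi>" for \<phi> \<psi>
    proof -
      obtain w where w: "rO1 w = rO1 \<psi>" "rC1 w = rC1 \<phi>" "Tr1 w = Tr1 \<psi>" using glue1[OF tr[symmetric]] by blast
      have "B w S = B \<psi> S" using BS w by simp
      thus ?thesis using split[of w S] split[of \<psi> S] w by simp
    qed
    from x obtain \<phi> where xp: "x = Tr1 \<phi>" by blast
    have cO: "conormal BO rO1 Tr1 (rO2 S) (Tr1 \<phi>) = BO (rO1 \<phi>) (rO2 S)"
      by (rule conormal_eq) (erule wdO)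
    have cC: "conormal BC rC1 Tr1 (rC2 S) (Tr1 \<phi>) = BC (rC1 \<phi>) (rC2 S)"
      by (rule conormal_eq) (erule wdC)
    show "conormal BO rO1 Tr1 (rO2 (single_layer B Tr1 g)) x
             + conormal BC rC1 Tr1 (rC2 (single_layer B Tr1 g)) x = g x"
      unfolding S_def[symmetric] xp cO cC
      using split[of \<phi> S] BS[of \<phi>] by simp
  qed
  have P3: "\<forall>f\<in>range Tr2. \<forall>x\<in>range Tr1.
               conormal BO rO1 Tr1 (double_layer B BO rO1 rO2 Tr2 f) x
             - conormal BC rC1 Tr1 (double_layer B BC rC1 rC2 Tr2 f) x = 0"
  proof (intro ballI)
    fix f x assume x: "x \<in> range Tr1"
    define F where "F = (SOME F. Tr2 F = f)"
    define PO where "PO = newton_pot B (L_ind BO rO1 (rO2 F))"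
    define PC where "PC = newton_pot B (L_ind BC rC1 (rC2 F))"
    have BPO: "\<And>\<phi>. B \<phi> PO = BO (rO1 \<phi>) (rO2 F)" using NPO unfolding PO_def by blast
    have BPC: "\<And>\<phi>. B \<phi> PC = BC (rC1 \<phi>) (rC2 F)" using NPC unfolding PC_def by blast
    have PCe: "PC = F - PO" using Psum[of F] unfolding PO_def PC_def by (simp add: algebra_simps)
    define DO where "DO = double_layer B BO rO1 rO2 Tr2 f"
    define DC where "DC = double_layer B BC rC1 rC2 Tr2 f"
    have DOe: "DO = rO2 (PO - F)"
      unfolding DO_def double_layer_def Let_def F_def[symmetric] PO_def[symmetric]
      using lin_diff[OF rO2l, of PO F] by simp
    have DCe: "DC = rC2 (PC - F)"
      unfolding DC_def double_layer_def Let_def F_def[symmetric] PC_def[symmetric]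
      using lin_diff[OF rC2l, of PC F] by simp
    have Odiff: "\<And>u a b. BO (rO1 u) (rO2 (a - b)) = BO (rO1 u) (rO2 a) - BO (rO1 u) (rO2 b)"
      using lin_diff[OF Ol2] by simp
    have Cdiff: "\<And>u a b. BC (rC1 u) (rC2 (a - b)) = BC (rC1 u) (rC2 a) - BC (rC1 u) (rC2 b)"
      using lin_diff[OF Cl2] by simp
    have aO: "BO (rO1 \<phi>) DO = - BC (rC1 \<phi>) (rC2 PO)" for \<phi>
      using split[of \<phi> PO] BPO[of \<phi>] unfolding DOe Odiff by (simp add: algebra_simps)
    have aC: "BC (rC1 \<phi>) DC = - BO (rO1 \<phi>) (rO2 PC)" for \<phi>
      using split[of \<phi> PC] BPC[of \<phi>] unfolding DCe Cdiff by (simp add: algebra_simps)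
    have wdO: "BO (rO1 \<phi>) DO = BO (rO1 \<psi>) DO" if tr: "Tr1 \<phi> = Tr1 \<psi>" for \<phi> \<psi>
    proof -
      obtain w where w: "rO1 w = rO1 \<phi>" "rC1 w = rC1 \<psi>" "Tr1 w = Tr1 \<phi>" using glue1[OF tr] by blast
      have "BO (rO1 \<phi>) DO = BO (rO1 w) DO" using w by simp
      also have "\<dots> = - BC (rC1 w) (rC2 PO)" by (rule aO)
      also have "\<dots> = - BC (rC1 \<psi>) (rC2 PO)" using w by simp
      also have "\<dots> = BO (rO1 \<psi>) DO" using aO[of \<psi>] by simp
      finally show ?thesis .
    qed
    have wdC: "BC (rC1 \<phi>) DC = BC (rC1 \<psi>) DC" if tr: "Tr1 \<phi> = Tr1 \<psi>" for \<phi> \<psi>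
    proof -
      obtain w where w: "rO1 w = rO1 \<psi>" "rC1 w = rC1 \<phi>" "Tr1 w = Tr1 \<psi>" using glue1[OF tr[symmetric]] by blast
      have "BC (rC1 \<phi>) DC = BC (rC1 w) DC" using w by simp
      also have "\<dots> = - BO (rO1 w) (rO2 PC)" by (rule aC)
      also have "\<dots> = - BO (rO1 \<psi>) (rO2 PC)" using w by simp
      also have "\<dots> = BC (rC1 \<psi>) DC" using aC[of \<psi>] by simp
      finally show ?thesis .
    qed
    from x obtain \<phi> where xp: "x = Tr1 \<phi>" by blast
    have "BO (rO1 \<phi>) (rO2 PC) = BC (rC1 \<phi>) (rC2 PO)"
      using split[of \<phi> PO] BPO[of \<phi>] unfolding PCe Odiff by (simp add: algebra_simps)
    show "conormal BO rO1 Tr1 (double_layer B BO rO1 rO2 Tr2 f) x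
             - conormal BC rC1 Tr1 (double_layer B BC rC1 rC2 Tr2 f) x = 0"
    proof -
      have cO: "conormal BO rO1 Tr1 DO (Tr1 \<phi>) = BO (rO1 \<phi>) DO"
        by (rule conormal_eq) (erule wdO)
      have cC: "conormal BC rC1 Tr1 DC (Tr1 \<phi>) = BC (rC1 \<phi>) DC"
        by (rule conormal_eq) (erule wdC)
      show ?thesis unfolding DO_def[symmetric] DC_def[symmetric] xp cO cC aO aC
        using \<open>BO (rO1 \<phi>) (rO2 PC) = BC (rC1 \<phi>) (rC2 PO)\<close> by simp
    qed
  qed
  have P4: "\<forall>TrO TrC. partial_trace s2 ip2 rO2 sD2 Tr2 TrO \<and> partial_trace s2 ip2 rC2 sD2 Tr2 TrC \<longrightarrow>
            (\<forall>g. in_N2 s1 ip1 Tr1 g \<longrightarrow>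
               TrO (rO2 (single_layer B Tr1 g)) - TrC (rC2 (single_layer B Tr1 g)) = 0)"
    unfolding partial_trace_def by (metis diff_self)
  show ?thesis using P1 P2 P3 P4 by blast
qed

end
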